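(* Let $k\geq 0$. Then \[ H_k(x)=\sum_{i=0}^{k+1}\sum_{j=0}^{2k+1}h_k(i,j)\,x^{2(k+1)i+j}, \] where $h_k(i,j)=t_k(k+1-i,\,k-j)$ for $0\leq i\leq k+1$, $0\leq j\leq k$, and $h_k(i,j)=t_k(i,\,j-k-1)$ for $0\leq i\leq k+1$, $k+1\leq j\leq 2k+1$. (That is, the $(k+2)\times 2(k+1)$ coefficient array of $H_k$ is obtained from the $(k+2)\times(k+1)$ array $t_k$ by placing a $180^\circ$ rotation of $t_k$ in front of $t_k$.)
   Context: $B_n(y)=\sum_{\pi\in B_n}y^{\mathrm{des}_B(\pi)}$ is the type $B$ Eulerian polynomial: $B_n$ is the set of signed permutations $\pi_1\cdots\pi_n$ of $[n]$, and with $\pi_0=0$, $\mathrm{des}_B(\pi)$ counts $i\in\{0,\dots,n-1\}$ with $\pi_i>\pi_{i+1}$; $B_0=1$. Define \[\widetilde T_k(x)=\sum_{l=0}^{k}B_{k-l}(x^{k+1})(x^{k+1}-1)^l\sum_{i=l}^{k}\binom{i}{l}x^{k-i},\] and for $0\le i\le k+1$, $0\le j\le k$ let $t_k(i,j)$ be the coefficient of $x^{(k+1)i+j}$ in $\widetilde T_k(x)$. Define \[H_k(x)=\sum_{l=0}^{k}B_{k-l}(x^{2k+2})(x^{2k+2}-1)^l\sum_{s=l}^{k}\binom{s}{l}x^{2k+1-s}+\sum_{l=0}^{k}B_{k-l}(x^{-2k-2})(x^{-2k-2}-1)^l\sum_{s=l}^{k}\binom{s}{l}x^{2(k+1)^2+s}.\]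 *)

theory Defs
  imports "HOL-Computational_Algebra.Polynomial"
begin

text \<open>Signed permutations of [n], encoded as functions nat => int with
  pi 0 = 0 (the convention pi_0 = 0), pi i = 0 for i > n, and i |-> |pi i|
  a bijection of {1..n}.\<close>
definition signed_perms :: "nat \<Rightarrow> (nat \<Rightarrow> int) set" where
  "signed_perms n = {\<pi>. (\<forall>i. i \<notin> {1..n} \<longrightarrow> \<pi> i = 0)
      \<and> bij_betw (\<lambda>i. nat \<bar>\<pi> i\<bar>) {1..n} {1..n}}"

definition desB :: "nat \<Rightarrow> (nat \<Rightarrow> int) \<Rightarrow> nat" where
  "desB n \<pi> = card {i \<in> {0..<n}. \<pi> i > \<pi> (Suc i)}"

definition Bpoly :: "nat \<Rightarrow> 'a::comm_ring_1 poly" where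
  "Bpoly n = (\<Sum>\<pi>\<in>signed_perms n. monom 1 (desB n \<pi>))"

definition Ttilde :: "nat \<Rightarrow> int poly" where
  "Ttilde k = (\<Sum>l=0..k. pcompose (Bpoly (k - l)) (monom 1 (k+1))
      * (monom 1 (k+1) - 1) ^ l
      * (\<Sum>i=l..k. of_nat (i choose l) * monom 1 (k - i)))"

definition tcoef :: "nat \<Rightarrow> nat \<Rightarrow> nat \<Rightarrow> int" where
  "tcoef k i j = coeff (Ttilde k) ((k+1)*i + j)"

definition hcoef :: "nat \<Rightarrow> nat \<Rightarrow> nat \<Rightarrow> int" where
  "hcoef k i j = (if j \<le> k then tcoef k (k+1-i) (k-j) else tcoef k i (j-k-1))"

definition Hk :: "nat \<Rightarrow> 'a::field \<Rightarrow> 'a" where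
  "Hk k x =
     (\<Sum>l=0..k. poly (Bpoly (k-l)) (x^(2*k+2)) * (x^(2*k+2) - 1)^l
        * (\<Sum>s=l..k. of_nat (s choose l) * x^(2*k+1-s)))
   + (\<Sum>l=0..k. poly (Bpoly (k-l)) (inverse (x^(2*k+2))) * (inverse (x^(2*k+2)) - 1)^l
        * (\<Sum>s=l..k. of_nat (s choose l) * x^(2*(k+1)^2+s)))"

end

theory Submission imports Defs begin

abbreviation mpi :: "int poly \<Rightarrow> 'a::comm_ring_1 poly" where "mpi p \<equiv> map_poly of_int p"

lemma mpi_add: "mpi (p + q) = (mpi p + mpi q :: 'a::comm_ring_1 poly)"
  by (rule poly_eqI) (simp add: coeff_map_poly)
lemma mpi_diff: "mpi (p - q) = (mpi p - mpi q :: 'a::comm_ring_1 poly)"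
  by (rule poly_eqI) (simp add: coeff_map_poly)
lemma mpi_mult: "mpi (p * q) = (mpi p * mpi q :: 'a::comm_ring_1 poly)"
  by (rule poly_eqI) (simp add: coeff_map_poly coeff_mult)
lemma mpi_one: "mpi 1 = (1 :: 'a::comm_ring_1 poly)" by simp
lemma mpi_power: "mpi (p ^ n) = (mpi p ^ n :: 'a::comm_ring_1 poly)"
  by (induction n) (simp_all add: mpi_mult)
lemma mpi_sum: "mpi (\<Sum>x\<in>A. f x) = (\<Sum>x\<in>A. mpi (f x) :: 'a::comm_ring_1 poly)"
  by (induction A rule: infinite_finite_induct) (simp_all add: mpi_add)
lemma mpi_of_nat: "mpi (of_nat n) = (of_nat n :: 'a::comm_ring_1 poly)"
  by (simp add: of_nat_poly map_poly_pCons)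
lemma mpi_lin: "mpi [:-1,1:] = ([:-1,1:] :: 'a::comm_ring_1 poly)"
  by (simp add: map_poly_pCons)
lemma mpi_Bpoly: "mpi (Bpoly n) = (Bpoly n :: 'a::comm_ring_1 poly)"
  by (simp add: Bpoly_def mpi_sum map_poly_monom)

lemma degree_mpi: "degree (mpi p :: 'a::comm_ring_1 poly) \<le> degree p"
  by (rule degree_le) (simp add: coeff_map_poly coeff_eq_0)

lemma desB_le: "desB n \<pi> \<le> n"
proof -
  have "desB n \<pi> \<le> card {0..<n}" unfolding desB_def by (rule card_mono) auto
  thus ?thesis by simp
qed

lemma degree_Bpoly: "degree (Bpoly n :: 'a::comm_ring_1 poly) \<le> n"
proof (cases "finite (signed_perms n)")
  case True
  show ?thesis unfolding Bpoly_def
    by (rule degree_sum_le[OF True]) (rule order_trans[OF degree_monom_le desB_le])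
next
  case False
  thus ?thesis unfolding Bpoly_def by simp
qed

definition Rp :: "nat \<Rightarrow> nat \<Rightarrow> 'a::comm_ring_1 poly" where
  "Rp k i = (\<Sum>l=0..k. Bpoly (k-l) * [:-1,1:]^l * of_nat (i choose l))"

definition cc :: "nat \<Rightarrow> nat \<Rightarrow> nat \<Rightarrow> int" where
  "cc k i a = coeff (Rp k i :: int poly) a"

lemma degree_Rp: "degree (Rp k i :: 'a::comm_ring_1 poly) \<le> k"
  unfolding Rp_def
proof (rule degree_sum_le[OF finite_atLeastAtMost])
  fix l assume l: "l \<in> {0..k}"
  have "degree (Bpoly (k-l) * [:-1,1:]^l * (of_nat (i choose l) :: 'a poly))
     \<le> degree (Bpoly (k-l) :: 'a poly) + degree ([:-1,1:]^l :: 'a poly) + degree (of_nat (i choose l) :: 'a poly)"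
    by (meson add_le_mono degree_mult_le order.trans order_refl)
  also have "\<dots> \<le> (k-l) + l + 0"
    by (intro add_mono degree_Bpoly) (auto simp: of_nat_poly intro: order.trans[OF degree_power_le])
  finally show "degree (Bpoly (k-l) * [:-1,1:]^l * (of_nat (i choose l) :: 'a poly)) \<le> k" using l by simp
qed

lemma mpi_Rp: "mpi (Rp k i) = (Rp k i :: 'a::comm_ring_1 poly)"
  by (simp add: Rp_def mpi_sum mpi_mult mpi_power mpi_Bpoly mpi_lin mpi_of_nat)

lemma poly_le_deg: fixes p :: "'a::comm_ring_1 poly" assumes "degree p \<le> d" shows "poly p y = (\<Sum>a=0..d. coeff p a * y^a)"
proof -
  have "poly p y = (\<Sum>a=0..degree p. coeff p a * y^a)" by (simp only: poly_altdef atLeast0AtMost)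
  also have "\<dots> = (\<Sum>a=0..d. coeff p a * y^a)"
    by (rule sum.mono_neutral_left) (use assms in \<open>auto simp: coeff_eq_0\<close>)
  finally show ?thesis .
qed

lemma poly_Rp: "k \<le> d \<Longrightarrow> poly (Rp k i :: 'a::comm_ring_1 poly) y = (\<Sum>a=0..d. of_int (cc k i a) * y^a)"
proof -
  assume d: "k \<le> d"
  have "poly (Rp k i :: 'a poly) y = poly (mpi (Rp k i)) y" by (simp add: mpi_Rp)
  also have "\<dots> = (\<Sum>a=0..d. coeff (mpi (Rp k i) :: 'a poly) a * y^a)"
    by (rule poly_le_deg) (meson d degree_Rp degree_mpi order_trans)
  finally show ?thesis by (simp add: coeff_map_poly cc_def)
qed

lemma poly_Rp': "poly (Rp k i :: 'a::comm_ring_1 poly) y = (\<Sum>l=0..k. poly (Bpoly (k-l)) y * (y-1)^l * of_nat (i choose l))"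
  by (simp add: Rp_def poly_sum)

lemma SW: "(\<Sum>l=0..k. A l * (\<Sum>i=l..k. of_nat (i choose l) * f i)) =
   (\<Sum>i=0..k. f i * (\<Sum>l=0..k. A l * of_nat (i choose l)) :: 'a::comm_ring_1)"
proof -
  have "\<And>l. (\<Sum>i=l..k. of_nat (i choose l) * f i) = (\<Sum>i=0..k. of_nat (i choose l) * f i)"
    by (rule sum.mono_neutral_left) (auto simp: binomial_eq_0)
  hence "(\<Sum>l=0..k. A l * (\<Sum>i=l..k. of_nat (i choose l) * f i)) =
     (\<Sum>l=0..k. \<Sum>i=0..k. A l * of_nat (i choose l) * f i)"
    by (simp add: sum_distrib_left mult.assoc)
  also have "\<dots> = (\<Sum>i=0..k. \<Sum>l=0..k. A l * of_nat (i choose l) * f i)" by (rule sum.swap)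
  also have "\<dots> = (\<Sum>i=0..k. f i * (\<Sum>l=0..k. A l * of_nat (i choose l)))"
    by (simp add: sum_distrib_left mult_ac)
  finally show ?thesis .
qed


lemma pw2: assumes "m + n*a = e" shows "(x::'a::comm_ring_1)^m * (x^n)^a = x^e"
proof -
  have "x^m * (x^n)^a = x^(m+n*a)" by (simp add: power_add power_mult)
  thus ?thesis using assms by simp
qed

lemma Ttilde_rep: "Ttilde k = (\<Sum>j=0..k. \<Sum>a=0..k. monom (cc k (k-j) a) ((k+1)*a + j))"
proof -
  have "poly (Ttilde k) x = poly (\<Sum>j=0..k. \<Sum>a=0..k. monom (cc k (k-j) a) ((k+1)*a + j)) x" for x :: int
  proof -
    define y where "y = x^(k+1)"
    have "poly (Ttilde k) x = (\<Sum>l=0..k. (poly (Bpoly (k-l)) y * (y - 1)^l) * (\<Sum>i=l..k. of_nat (i choose l) * x^(k-i)))"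
      by (simp add: Ttilde_def poly_sum poly_pcompose poly_monom y_def mult.assoc)
    also have "\<dots> = (\<Sum>i=0..k. x^(k-i) * (\<Sum>l=0..k. (poly (Bpoly (k-l)) y * (y - 1)^l) * of_nat (i choose l)))"
      by (rule SW)
    also have "\<dots> = (\<Sum>i=0..k. x^(k-i) * poly (Rp k i) y)"
      by (simp add: poly_Rp')
    also have "\<dots> = (\<Sum>i=0..k. x^(k-i) * (\<Sum>a=0..k. of_int (cc k i a) * y^a))"
      by (simp add: poly_Rp[where d=k])
    also have "\<dots> = (\<Sum>j=0..k. x^(k-(k-j)) * (\<Sum>a=0..k. of_int (cc k (k-j) a) * y^a))"
      by (subst sum.atLeastAtMost_rev) simp
    also have "\<dots> = (\<Sum>j=0..k. \<Sum>a=0..k. of_int (cc k (k-j) a) * x^((k+1)*a + j))"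
      unfolding sum_distrib_left
    proof (intro sum.cong refl)
      fix j a assume "j \<in> {0..k}"
      hence "x^(k-(k-j)) * y^a = x^((k+1)*a + j)" unfolding y_def by (intro pw2) auto
      thus "x^(k-(k-j)) * (of_int (cc k (k-j) a) * y^a) = of_int (cc k (k-j) a) * x^((k+1)*a + j)"
        by (metis mult.left_commute)
    qed
    also have "\<dots> = poly (\<Sum>j=0..k. \<Sum>a=0..k. monom (cc k (k-j) a) ((k+1)*a + j)) x"
      by (simp add: poly_sum poly_monom)
    finally show ?thesis .
  qed
  thus ?thesis using poly_eq_poly_eq_iff by blast
qed

lemma divmod_uniq: "(r1::nat) < m \<Longrightarrow> r2 < m \<Longrightarrow> m*a1 + r1 = m*a2 + r2 \<longleftrightarrow> a1 = a2 \<and> r1 = r2"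
proof
  assume r: "r1 < m" "r2 < m" and e: "m*a1 + r1 = m*a2 + r2"
  have "(m*a1 + r1) mod m = r1" "(m*a2 + r2) mod m = r2" using r by simp_all
  hence "r1 = r2" using e by simp
  moreover have "m > 0" using r by simp
  ultimately show "a1 = a2 \<and> r1 = r2" using e by simp
qed auto

lemma tcoef_cc: assumes "j \<le> k" shows "tcoef k a j = cc k (k-j) a"
proof -
  have "tcoef k a j = (\<Sum>j'=0..k. \<Sum>a'=0..k. if (k+1)*a' + j' = (k+1)*a + j then cc k (k-j') a' else 0)"
    by (simp add: tcoef_def Ttilde_rep coeff_sum coeff_monom)
  also have "\<dots> = (\<Sum>j'=0..k. \<Sum>a'=0..k. if j' = j \<and> a' = a then cc k (k-j') a' else 0)"
    by (intro sum.cong refl) (use assms divmod_uniq[of _ "k+1"] in auto)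
  also have "\<dots> = (\<Sum>j'=0..k. if j' = j then (if a \<le> k then cc k (k-j) a else 0) else 0)"
  proof (intro sum.cong refl)
    fix j' show "(\<Sum>a'=0..k. if j' = j \<and> a' = a then cc k (k-j') a' else 0) =
       (if j' = j then (if a \<le> k then cc k (k-j) a else 0) else 0)"
      by (cases "j' = j") (simp_all add: sum.delta')
  qed
  also have "\<dots> = (if a \<le> k then cc k (k-j) a else 0)"
    using assms by (simp add: sum.delta')
  also have "\<dots> = cc k (k-j) a"
    by (auto simp: cc_def not_le intro!: coeff_eq_0 le_less_trans[OF degree_Rp])
  finally show ?thesis .
qed


lemma pw: fixes x :: "'a::field" assumes "x \<noteq> 0" "a \<le> k+1"
  shows "x^(2*(k+1)^2+j) * inverse (x^(2*k+2))^a = x^(2*(k+1)*(k+1-a)+j)"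
proof -
  obtain m where m2: "k+1-a = m" by blast
  have h2: "k+1 = m+a" using assms(2) m2 by simp
  have h1: "2*k+2 = 2*(m+a)" using h2 by simp
  have e: "2*(k+1)^2+j = (2*(k+1)*(k+1-a)+j) + (2*k+2)*a"
    by (simp only: h1 h2 m2) (simp add: power2_eq_square algebra_simps)
  have "x^(2*(k+1)^2+j) * inverse (x^(2*k+2))^a
      = x^(2*(k+1)*(k+1-a)+j) * ((x^(2*k+2))^a * inverse (x^(2*k+2))^a)"
    unfolding e power_add power_mult by (simp add: mult_ac)
  also have "(x^(2*k+2))^a * inverse (x^(2*k+2))^a = 1"
  proof -
    have nz: "x^(2*k+2) \<noteq> 0" using assms(1) by simp
    show ?thesis by (metis nz power_mult_distrib right_inverse power_one)
  qed
  finally show ?thesis by simp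
qed

lemma split_ivl: fixes k :: nat shows "(\<Sum>j=0..2*k+1. g j) = (\<Sum>j=0..k. g j) + (\<Sum>j=0..k. g (k+1+j) :: 'a::comm_monoid_add)"
proof -
  have "{0..2*k+1} = {0..k} \<union> {k+1..2*k+1}" by auto
  hence "(\<Sum>j=0..2*k+1. g j) = (\<Sum>j=0..k. g j) + (\<Sum>j=k+1..2*k+1. g j)"
    by (simp add: sum.union_disjoint)
  also have "(\<Sum>j=k+1..2*k+1. g j) = (\<Sum>j=0..k. g (k+1+j))"
    by (subst sum.atLeastAtMost_shift_0) (auto simp: comp_def)
  finally show ?thesis .
qed

theorem lemma3p1:
  fixes k :: nat and x :: "'a::field"
  assumes "x \<noteq> 0"
  shows "Hk k x = (\<Sum>i=0..k+1. \<Sum>j=0..2*k+1. of_int (hcoef k i j) * x^(2*(k+1)*i + j))"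
proof -
  define z where "z = x^(2*k+2)"
  define w where "w = inverse z"
  have P1: "(\<Sum>l=0..k. poly (Bpoly (k-l)) z * (z - 1)^l
        * (\<Sum>s=l..k. of_nat (s choose l) * x^(2*k+1-s)))
      = (\<Sum>s=0..k. \<Sum>a=0..k+1. of_int (cc k s a) * x^(2*(k+1)*a + (k+1+(k-s))))"
  proof -
    have "(\<Sum>l=0..k. poly (Bpoly (k-l)) z * (z - 1)^l
        * (\<Sum>s=l..k. of_nat (s choose l) * x^(2*k+1-s)))
       = (\<Sum>s=0..k. x^(2*k+1-s) * (\<Sum>l=0..k. (poly (Bpoly (k-l)) z * (z - 1)^l) * of_nat (s choose l)))"
      by (rule SW)
    also have "\<dots> = (\<Sum>s=0..k. x^(2*k+1-s) * poly (Rp k s) z)"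
      by (simp add: poly_Rp' mult.assoc)
    also have "\<dots> = (\<Sum>s=0..k. x^(2*k+1-s) * (\<Sum>a=0..k+1. of_int (cc k s a) * z^a))"
      by (simp add: poly_Rp[where d="k+1"])
    also have "\<dots> = (\<Sum>s=0..k. \<Sum>a=0..k+1. of_int (cc k s a) * x^(2*(k+1)*a + (k+1+(k-s))))"
    proof (intro sum.cong refl)
      fix s a assume s: "s \<in> {0..k}"
      have e: "2*k+1-s = k+1+(k-s)" using s by auto
      show "x^(2*k+1-s) * (\<Sum>a=0..k+1. of_int (cc k s a) * z^a) = (\<Sum>a=0..k+1. of_int (cc k s a) * x^(2*(k+1)*a + (k+1+(k-s))))"
        unfolding sum_distrib_left
      proof (intro sum.cong refl)
        fix a
        have "x^(2*k+1-s) * z^a = x^(2*(k+1)*a + (k+1+(k-s)))" unfolding z_def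
          by (rule pw2) (use s in auto)
        thus "x^(2*k+1-s) * (of_int (cc k s a) * z^a) = of_int (cc k s a) * x^(2*(k+1)*a + (k+1+(k-s)))"
          by (metis mult.left_commute)
      qed
    qed
    finally show ?thesis .
  qed
  have P2: "(\<Sum>l=0..k. poly (Bpoly (k-l)) w * (w - 1)^l
        * (\<Sum>s=l..k. of_nat (s choose l) * x^(2*(k+1)^2+s)))
      = (\<Sum>s=0..k. \<Sum>a=0..k+1. of_int (cc k s a) * x^(2*(k+1)*(k+1-a) + s))"
  proof -
    have "(\<Sum>l=0..k. poly (Bpoly (k-l)) w * (w - 1)^l
        * (\<Sum>s=l..k. of_nat (s choose l) * x^(2*(k+1)^2+s)))
       = (\<Sum>s=0..k. x^(2*(k+1)^2+s) * (\<Sum>l=0..k. (poly (Bpoly (k-l)) w * (w - 1)^l) * of_nat (s choose l)))"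
      by (rule SW)
    also have "\<dots> = (\<Sum>s=0..k. x^(2*(k+1)^2+s) * poly (Rp k s) w)"
      by (simp add: poly_Rp' mult.assoc)
    also have "\<dots> = (\<Sum>s=0..k. x^(2*(k+1)^2+s) * (\<Sum>a=0..k+1. of_int (cc k s a) * w^a))"
      by (simp add: poly_Rp[where d="k+1"])
    also have "\<dots> = (\<Sum>s=0..k. \<Sum>a=0..k+1. of_int (cc k s a) * x^(2*(k+1)*(k+1-a) + s))"
      unfolding sum_distrib_left
    proof (intro sum.cong refl)
      fix s a assume a: "a \<in> {0..k+1}"
      show "x^(2*(k+1)^2+s) * (of_int (cc k s a) * w^a) = of_int (cc k s a) * x^(2*(k+1)*(k+1-a) + s)"
        using pw[OF assms, of a k s] a unfolding w_def z_def by (metis atLeastAtMost_iff mult.left_commute)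
    qed
    finally show ?thesis .
  qed
  have H: "Hk k x = (\<Sum>s=0..k. \<Sum>a=0..k+1. of_int (cc k s a) * x^(2*(k+1)*a + (k+1+(k-s))))
      + (\<Sum>s=0..k. \<Sum>a=0..k+1. of_int (cc k s a) * x^(2*(k+1)*(k+1-a) + s))"
    unfolding P1[symmetric] P2[symmetric] Hk_def z_def w_def by simp
  have "(\<Sum>i=0..k+1. \<Sum>j=0..2*k+1. of_int (hcoef k i j) * x^(2*(k+1)*i + j))
     = (\<Sum>i=0..k+1. \<Sum>j=0..k. of_int (hcoef k i j) * x^(2*(k+1)*i + j))
     + (\<Sum>i=0..k+1. \<Sum>j=0..k. of_int (hcoef k i (k+1+j)) * x^(2*(k+1)*i + (k+1+j)))"
    by (simp only: split_ivl sum.distrib)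
  also have "(\<Sum>i=0..k+1. \<Sum>j=0..k. of_int (hcoef k i j) * x^(2*(k+1)*i + j))
      = (\<Sum>s=0..k. \<Sum>a=0..k+1. of_int (cc k s a) * x^(2*(k+1)*(k+1-a) + s))"
  proof -
    have "(\<Sum>i=0..k+1. \<Sum>j=0..k. of_int (hcoef k i j) * x^(2*(k+1)*i + j))
        = (\<Sum>i=0..k+1. \<Sum>j=0..k. of_int (cc k j (k+1-i)) * x^(2*(k+1)*i + j))"
      by (intro sum.cong refl) (simp add: hcoef_def tcoef_cc)
    also have "\<dots> = (\<Sum>j=0..k. \<Sum>i=0..k+1. of_int (cc k j (k+1-i)) * x^(2*(k+1)*i + j))"
      by (rule sum.swap)
    also have "\<dots> = (\<Sum>j=0..k. \<Sum>a=0..k+1. of_int (cc k j (k+1-(k+1-a))) * x^(2*(k+1)*(k+1-a) + j))"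
      by (rule sum.cong[OF refl], subst sum.atLeastAtMost_rev) simp
    also have "\<dots> = (\<Sum>s=0..k. \<Sum>a=0..k+1. of_int (cc k s a) * x^(2*(k+1)*(k+1-a) + s))"
      by (intro sum.cong refl) auto
    finally show ?thesis .
  qed
  also have "(\<Sum>i=0..k+1. \<Sum>j=0..k. of_int (hcoef k i (k+1+j)) * x^(2*(k+1)*i + (k+1+j)))
      = (\<Sum>s=0..k. \<Sum>a=0..k+1. of_int (cc k s a) * x^(2*(k+1)*a + (k+1+(k-s))))"
  proof -
    have "(\<Sum>i=0..k+1. \<Sum>j=0..k. of_int (hcoef k i (k+1+j)) * x^(2*(k+1)*i + (k+1+j)))
        = (\<Sum>i=0..k+1. \<Sum>j=0..k. of_int (cc k (k-j) i) * x^(2*(k+1)*i + (k+1+j)))"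
      by (intro sum.cong refl) (simp add: hcoef_def tcoef_cc)
    also have "\<dots> = (\<Sum>j=0..k. \<Sum>i=0..k+1. of_int (cc k (k-j) i) * x^(2*(k+1)*i + (k+1+j)))"
      by (rule sum.swap)
    also have "\<dots> = (\<Sum>s=0..k. \<Sum>i=0..k+1. of_int (cc k (k-(k-s)) i) * x^(2*(k+1)*i + (k+1+(k-s))))"
      by (subst sum.atLeastAtMost_rev) simp
    also have "\<dots> = (\<Sum>s=0..k. \<Sum>a=0..k+1. of_int (cc k s a) * x^(2*(k+1)*a + (k+1+(k-s))))"
      by (intro sum.cong refl) auto
    finally show ?thesis .
  qed
  finally show ?thesis using H by simp
qed

end
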